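(* Let $T>0$ and $\alpha_1,\alpha_2\ge0$ with $\alpha_1+\alpha_2=1$. Consider problem (P2): maximize $r$ over $(r,r_1,r_2,x,p_1,p_2)$, where $x:[0,T]\to\mathbb{R}$ is an arbitrary (measurable) trajectory with no speed constraint, subject to $r_k\ge\alpha_k r$ for $k=1,2$, $(r_1,r_2)\in\mathcal{C}(x,p)$, $p_1(t)+p_2(t)\le\bar P$ and $p_k(t)\ge0$ for all $t$. Then an optimal solution of (P2) is: $x^*(t)=-D/2$, $p_1^*(t)=\bar P$, $p_2^*(t)=0$ for $t\in[0,\alpha_1T)$, and $x^*(t)=D/2$, $p_2^*(t)=\bar P$, $p_1^*(t)=0$ for $t\in[\alpha_1T,T]$. The corresponding optimal rate pair is $r_1^*=\alpha_1\log_2\left(1+\frac{\bar P\beta_0}{H^2}\right)$, $r_2^*=\alpha_2\log_2\left(1+\frac{\bar P\beta_0}{H^2}\right)$.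
   Context: Fix $D>0$, $H>0$, $\beta_0>0$, $\bar P>0$. Ground users GU 1, GU 2 are at horizontal positions $x_1=-D/2$, $x_2=D/2$; for UAV position $x\in\mathbb{R}$ (constant altitude $H$), $h_k(x)=\beta_0/((x-x_k)^2+H^2)$. A power allocation is a pair of measurable functions $p_1,p_2:[0,T]\to[0,\infty)$. $\mathcal{C}(x,p)$ is the set of $(r_1,r_2)$, $r_1,r_2\ge0$, with $r_1\le\frac1T\int_0^T\log_2(1+p_1(t)h_1(x(t)))dt$, $r_2\le\frac1T\int_0^T\log_2(1+p_2(t)h_2(x(t)))dt$, $r_1+r_2\le\frac1T\int_0^T\log_2(1+p_1(t)h_1(x(t))+p_2(t)h_2(x(t)))dt$. *)

theory Defs
  imports "HOL-Analysis.Analysis"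
begin

text \<open>Channel gain from a UAV at horizontal position x (altitude H) to a ground user at xk.\<close>
definition chan_gain :: "real \<Rightarrow> real \<Rightarrow> real \<Rightarrow> real \<Rightarrow> real" where
  "chan_gain \<beta>0 H xk x = \<beta>0 / ((x - xk)\<^sup>2 + H\<^sup>2)"

text \<open>Capacity region C(x,p) over horizon [0,T]; GU1 at -D/2, GU2 at D/2.\<close>
definition cap_region ::
  "real \<Rightarrow> real \<Rightarrow> real \<Rightarrow> real \<Rightarrow> (real \<Rightarrow> real) \<Rightarrow> (real \<Rightarrow> real) \<Rightarrow> (real \<Rightarrow> real)
   \<Rightarrow> (real \<times> real) set" where
  "cap_region D H \<beta>0 T x p1 p2 =
     {(r1, r2). r1 \<ge> 0 \<and> r2 \<ge> 0 \<and>
        r1 \<le> (1 / T) * (LINT t:{0..T}|lborel. log 2 (1 + p1 t * chan_gain \<beta>0 H (- D / 2) (x t))) \<and>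
        r2 \<le> (1 / T) * (LINT t:{0..T}|lborel. log 2 (1 + p2 t * chan_gain \<beta>0 H (D / 2) (x t))) \<and>
        r1 + r2 \<le> (1 / T) * (LINT t:{0..T}|lborel.
            log 2 (1 + p1 t * chan_gain \<beta>0 H (- D / 2) (x t) + p2 t * chan_gain \<beta>0 H (D / 2) (x t)))}"

definition feasible_P2 ::
  "real \<Rightarrow> real \<Rightarrow> real \<Rightarrow> real \<Rightarrow> real \<Rightarrow> real \<Rightarrow> real \<Rightarrow>
   real \<Rightarrow> real \<Rightarrow> real \<Rightarrow> (real \<Rightarrow> real) \<Rightarrow> (real \<Rightarrow> real) \<Rightarrow> (real \<Rightarrow> real) \<Rightarrow> bool" where
  "feasible_P2 D H \<beta>0 Pbar T \<alpha>1 \<alpha>2 r r1 r2 x p1 p2 \<longleftrightarrow>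
     x \<in> borel_measurable (restrict_space lborel {0..T}) \<and>
     p1 \<in> borel_measurable (restrict_space lborel {0..T}) \<and>
     p2 \<in> borel_measurable (restrict_space lborel {0..T}) \<and>
     r1 \<ge> \<alpha>1 * r \<and> r2 \<ge> \<alpha>2 * r \<and>
     (r1, r2) \<in> cap_region D H \<beta>0 T x p1 p2 \<and>
     (\<forall>t\<in>{0..T}. p1 t \<ge> 0 \<and> p2 t \<ge> 0 \<and> p1 t + p2 t \<le> Pbar)"

end

theory Submission
  imports Defs
begin

lemma m1: fixes a b c T :: real shows "(\<lambda>t::real. if t < a then b else c) \<in> borel_measurable (restrict_space lborel {0..T})"
  by (rule measurable_restrict_space1) measurable
lemma i1: fixes a c T :: real assumes "0 \<le> a" "a \<le> T"
  shows "(LINT t:{0..T}|lborel. (if t < a then c else 0)) = c * a"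
proof -
  have "(\<lambda>t. indicator {0..T} t *\<^sub>R (if t < a then c else 0)) = (\<lambda>t. c * indicator {0..<a} t)"
    using assms by (auto simp: indicator_def fun_eq_iff)
  then show ?thesis using assms by (simp add: set_lebesgue_integral_def)
qed
lemma i2: fixes a c T :: real assumes "0 \<le> a" "a \<le> T"
  shows "(LINT t:{0..T}|lborel. (if t < a then 0 else c)) = c * (T - a)"
proof -
  have "(\<lambda>t. indicator {0..T} t *\<^sub>R (if t < a then 0 else c)) = (\<lambda>t. c * indicator {a..T} t)"
    using assms by (auto simp: indicator_def fun_eq_iff)
  then show ?thesis using assms by (simp add: set_lebesgue_integral_def)
qed
lemma i3: fixes c T :: real assumes "0 \<le> T"
  shows "(LINT t:{0..T}|lborel. c) = c * T"
  using assms by (simp add: set_lebesgue_integral_def)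
lemma bnd: fixes f :: "real \<Rightarrow> real" assumes "T>0" "c \<ge> 0" "\<And>t. t\<in>{0..T} \<Longrightarrow> f t \<le> c"
 shows "(LINT t:{0..T}|lborel. f t) \<le> c * T"
proof (cases "set_integrable lborel {0..T} f")
  case True
  have ci: "set_integrable lborel {0..T} (\<lambda>t. c)"
    using assms by (simp add: set_integrable_def integrable_indicator_iff emeasure_lborel_Icc)
  have "(LINT t:{0..T}|lborel. f t) \<le> (LINT t:{0..T}|lborel. c)"
    by (rule set_integral_mono[OF True ci assms(3)])
  also have "\<dots> = c * T" using assms by (simp add: set_lebesgue_integral_def)
  finally show ?thesis .
next
  case False
  then have "(LINT t:{0..T}|lborel. f t) = 0"
    by (simp add: set_lebesgue_integral_def set_integrable_def not_integrable_integral_eq)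
  then show ?thesis using assms by simp
qed

theorem lemma4:
  fixes D H \<beta>0 Pbar T \<alpha>1 \<alpha>2 :: real
  assumes "D > 0" "H > 0" "\<beta>0 > 0" "Pbar > 0" "T > 0"
    and "\<alpha>1 \<ge> 0" "\<alpha>2 \<ge> 0" "\<alpha>1 + \<alpha>2 = 1"
  defines "xs \<equiv> (\<lambda>t::real. if t < \<alpha>1 * T then - D / 2 else D / 2)"
    and "p1s \<equiv> (\<lambda>t::real. if t < \<alpha>1 * T then Pbar else 0)"
    and "p2s \<equiv> (\<lambda>t::real. if t < \<alpha>1 * T then 0 else Pbar)"
    and "rs \<equiv> log 2 (1 + Pbar * \<beta>0 / H\<^sup>2)"
    and "r1s \<equiv> \<alpha>1 * log 2 (1 + Pbar * \<beta>0 / H\<^sup>2)"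
    and "r2s \<equiv> \<alpha>2 * log 2 (1 + Pbar * \<beta>0 / H\<^sup>2)"
  shows "feasible_P2 D H \<beta>0 Pbar T \<alpha>1 \<alpha>2 rs r1s r2s xs p1s p2s \<and>
         (\<forall>r r1 r2 x p1 p2. feasible_P2 D H \<beta>0 Pbar T \<alpha>1 \<alpha>2 r r1 r2 x p1 p2 \<longrightarrow> r \<le> rs)"
  proof -
  let ?c = "Pbar * \<beta>0 / H\<^sup>2"
  have hb: "chan_gain \<beta>0 H xk y \<le> \<beta>0 / H\<^sup>2" for xk y
    unfolding chan_gain_def using assms(2,3)
    by (intro divide_left_mono) (auto intro!: mult_pos_pos add_nonneg_pos)
  have hpos: "chan_gain \<beta>0 H xk y \<ge> 0" for xk y
    unfolding chan_gain_def using assms(2,3) by (auto intro: add_nonneg_pos)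
  have cpos: "?c > 0" using assms by simp
  have rspos: "rs \<ge> 0" unfolding rs_def using cpos by simp
  have a1T: "0 \<le> \<alpha>1 * T" "\<alpha>1 * T \<le> T" using assms by (auto simp: mult_le_cancel_right1)
  have g1: "chan_gain \<beta>0 H (- D / 2) (- D / 2) = \<beta>0 / H\<^sup>2"
    and g2: "chan_gain \<beta>0 H (D / 2) (D / 2) = \<beta>0 / H\<^sup>2" by (simp_all add: chan_gain_def)
  have e1: "(\<lambda>t. log 2 (1 + p1s t * chan_gain \<beta>0 H (- D / 2) (xs t))) = (\<lambda>t. if t < \<alpha>1 * T then rs else 0)"
    by (auto simp: fun_eq_iff p1s_def xs_def chan_gain_def rs_def)
  have e2: "(\<lambda>t. log 2 (1 + p2s t * chan_gain \<beta>0 H (D / 2) (xs t))) = (\<lambda>t. if t < \<alpha>1 * T then 0 else rs)"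
    by (auto simp: fun_eq_iff p2s_def xs_def chan_gain_def rs_def)
  have e3: "(\<lambda>t. log 2 (1 + p1s t * chan_gain \<beta>0 H (- D / 2) (xs t) + p2s t * chan_gain \<beta>0 H (D / 2) (xs t))) = (\<lambda>t. rs)"
    by (auto simp: fun_eq_iff p1s_def p2s_def xs_def chan_gain_def rs_def)
  have F: "feasible_P2 D H \<beta>0 Pbar T \<alpha>1 \<alpha>2 rs r1s r2s xs p1s p2s"
    unfolding feasible_P2_def cap_region_def
  proof (intro conjI)
    show "xs \<in> borel_measurable (restrict_space lborel {0..T})" unfolding xs_def by (rule m1)
    show "p1s \<in> borel_measurable (restrict_space lborel {0..T})" unfolding p1s_def by (rule m1)
    show "p2s \<in> borel_measurable (restrict_space lborel {0..T})" unfolding p2s_def by (rule m1)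
    show "r1s \<ge> \<alpha>1 * rs" "r2s \<ge> \<alpha>2 * rs" by (simp_all add: r1s_def r2s_def rs_def)
    show "\<forall>t\<in>{0..T}. p1s t \<ge> 0 \<and> p2s t \<ge> 0 \<and> p1s t + p2s t \<le> Pbar"
      using assms(4) by (auto simp: p1s_def p2s_def)
    have I1: "(LINT t:{0..T}|lborel. log 2 (1 + p1s t * chan_gain \<beta>0 H (- D / 2) (xs t))) = rs * (\<alpha>1 * T)"
      unfolding e1 using i1[OF a1T] .
    have I2: "(LINT t:{0..T}|lborel. log 2 (1 + p2s t * chan_gain \<beta>0 H (D / 2) (xs t))) = rs * (T - \<alpha>1 * T)"
      unfolding e2 using i2[OF a1T] .
    have I3: "(LINT t:{0..T}|lborel. log 2 (1 + p1s t * chan_gain \<beta>0 H (- D / 2) (xs t) + p2s t * chan_gain \<beta>0 H (D / 2) (xs t))) = rs * T"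
      unfolding e3 using i3 assms(5) by simp
    have a2: "\<alpha>2 = 1 - \<alpha>1" using assms by simp
    show "(r1s, r2s) \<in> {(r1, r2). r1 \<ge> 0 \<and> r2 \<ge> 0 \<and>
        r1 \<le> (1 / T) * (LINT t:{0..T}|lborel. log 2 (1 + p1s t * chan_gain \<beta>0 H (- D / 2) (xs t))) \<and>
        r2 \<le> (1 / T) * (LINT t:{0..T}|lborel. log 2 (1 + p2s t * chan_gain \<beta>0 H (D / 2) (xs t))) \<and>
        r1 + r2 \<le> (1 / T) * (LINT t:{0..T}|lborel.
            log 2 (1 + p1s t * chan_gain \<beta>0 H (- D / 2) (xs t) + p2s t * chan_gain \<beta>0 H (D / 2) (xs t)))}"
      unfolding I1 I2 I3 using assms(5,6,7) rspos
      by (auto simp: r1s_def r2s_def rs_def[symmetric] a2 algebra_simps mult_left_le_one_le)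
  qed
  have U: "r \<le> rs" if "feasible_P2 D H \<beta>0 Pbar T \<alpha>1 \<alpha>2 r r1 r2 x p1 p2" for r r1 r2 x p1 p2
  proof -
    from that have f: "r1 \<ge> \<alpha>1 * r" "r2 \<ge> \<alpha>2 * r"
      and P: "\<forall>t\<in>{0..T}. p1 t \<ge> 0 \<and> p2 t \<ge> 0 \<and> p1 t + p2 t \<le> Pbar"
      and S: "r1 + r2 \<le> (1 / T) * (LINT t:{0..T}|lborel.
            log 2 (1 + p1 t * chan_gain \<beta>0 H (- D / 2) (x t) + p2 t * chan_gain \<beta>0 H (D / 2) (x t)))"
      unfolding feasible_P2_def cap_region_def by auto
    have pt: "log 2 (1 + p1 t * chan_gain \<beta>0 H (- D / 2) (x t) + p2 t * chan_gain \<beta>0 H (D / 2) (x t)) \<le> rs"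
      if t: "t \<in> {0..T}" for t
    proof -
      have p: "p1 t \<ge> 0" "p2 t \<ge> 0" "p1 t + p2 t \<le> Pbar" using P t by auto
      have "p1 t * chan_gain \<beta>0 H (- D / 2) (x t) \<le> p1 t * (\<beta>0 / H\<^sup>2)"
        using p hb by (intro mult_left_mono) auto
      moreover have "p2 t * chan_gain \<beta>0 H (D / 2) (x t) \<le> p2 t * (\<beta>0 / H\<^sup>2)"
        using p hb by (intro mult_left_mono) auto
      moreover have "(p1 t + p2 t) * (\<beta>0 / H\<^sup>2) \<le> Pbar * (\<beta>0 / H\<^sup>2)"
        using p assms(2,3) by (intro mult_right_mono) auto
      moreover have "(p1 t + p2 t) * (\<beta>0 / H\<^sup>2) = p1 t * (\<beta>0 / H\<^sup>2) + p2 t * (\<beta>0 / H\<^sup>2)"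
        by (simp add: distrib_right add_divide_distrib)
      moreover have "Pbar * (\<beta>0 / H\<^sup>2) = ?c" by simp
      moreover have "0 \<le> p1 t * chan_gain \<beta>0 H (- D / 2) (x t)" "0 \<le> p2 t * chan_gain \<beta>0 H (D / 2) (x t)"
        using p hpos by auto
      ultimately have A: "1 + p1 t * chan_gain \<beta>0 H (- D / 2) (x t) + p2 t * chan_gain \<beta>0 H (D / 2) (x t) \<le> 1 + ?c"
        "0 < 1 + p1 t * chan_gain \<beta>0 H (- D / 2) (x t) + p2 t * chan_gain \<beta>0 H (D / 2) (x t)"
        by linarith+
      show ?thesis unfolding rs_def using A by simp
    qed
    have "(LINT t:{0..T}|lborel.
            log 2 (1 + p1 t * chan_gain \<beta>0 H (- D / 2) (x t) + p2 t * chan_gain \<beta>0 H (D / 2) (x t))) \<le> rs * T"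
      by (rule bnd[OF assms(5) rspos pt])
    with S assms(5) have "T * (r1 + r2) \<le> T * rs" by (simp add: field_simps)
    with assms(5) have "r1 + r2 \<le> rs" by (simp add: mult_le_cancel_left_pos)
    moreover have "r = \<alpha>1 * r + \<alpha>2 * r" using assms(8) by (metis distrib_right mult_1)
    ultimately show ?thesis using f by linarith
  qed
  show ?thesis using F U by blast
qed

end
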